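(* Let $R$ be a bounded distributive lattice, regarded as a commutative semiring with addition the join, multiplication the meet, $0$ the bottom and $1$ the top element. Then $\mathsf{Kl}(D_R)$ is a causal Markov category.
   Context: The Markov category $\mathsf{Kl}(D_R)$ has sets as objects; a morphism $f\colon A\to X$ assigns to each $a\in A$ a finitely supported function $f(\cdot\mid a)\colon X\to R$ with $\sum_x f(x\mid a)=1$; composition $(g\circ f)(y\mid a)=\sum_x g(y\mid x)f(x\mid a)$; tensor product is the cartesian product with $(f\otimes g)(x,y\mid a,b)=f(x\mid a)g(y\mid b)$; $\mathrm{copy}_X(x_1,x_2\mid x)=\delta_x(x_1)\delta_x(x_2)$; $\mathrm{del}_X$ is the unique morphism to the singleton. A Markov category is causal if for all $f\colon A\to W$, $g\colon W\to X$, $h_1,h_2\colon X\to Y$ with $(\mathrm{id}_X\otimes h_1)\circ\mathrm{copy}_X\circ g\circ f=(\mathrm{id}_X\otimes h_2)\circ\mathrm{copy}_X\circ g\circ f$, also $\big(\mathrm{id}_W\otimes((\mathrm{id}_X\otimes h_1)\circ\mathrm{copy}_X\circ g)\big)\circ\mathrm{copy}_W\circ f=\big(\mathrm{id}_W\otimes((\mathrm{id}_X\otimes h_2)\circ\mathrm{copy}_X\circ g)\big)\circ\mathrm{copy}_W\circ f$. *)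

theory Defs
  imports Main
begin

text \<open>Objects are (nonempty) types; a morphism A -> X is a function f :: 'a => 'x => 'r,
where f a x stands for f(x | a).\<close>

definition lsum :: "('a \<Rightarrow> 'r::{distrib_lattice,bounded_lattice}) \<Rightarrow> 'a set \<Rightarrow> 'r" where
  "lsum f S = Finite_Set.fold (\<lambda>x acc. sup (f x) acc) bot S"

definition supp :: "('x \<Rightarrow> 'r::{distrib_lattice,bounded_lattice}) \<Rightarrow> 'x set" where
  "supp p = {x. p x \<noteq> bot}"

definition kmor :: "('a \<Rightarrow> 'x \<Rightarrow> 'r::{distrib_lattice,bounded_lattice}) \<Rightarrow> bool" where
  "kmor f \<longleftrightarrow> (\<forall>a. finite (supp (f a)) \<and> lsum (f a) (supp (f a)) = top)"

definition kcomp :: "('x \<Rightarrow> 'y \<Rightarrow> 'r::{distrib_lattice,bounded_lattice}) \<Rightarrow> ('a \<Rightarrow> 'x \<Rightarrow> 'r) \<Rightarrow> 'a \<Rightarrow> 'y \<Rightarrow> 'r" where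
  "kcomp g f = (\<lambda>a y. lsum (\<lambda>x. inf (g x y) (f a x)) (supp (f a)))"

definition ktensor :: "('a \<Rightarrow> 'x \<Rightarrow> 'r::{distrib_lattice,bounded_lattice}) \<Rightarrow> ('b \<Rightarrow> 'y \<Rightarrow> 'r)
    \<Rightarrow> ('a \<times> 'b) \<Rightarrow> ('x \<times> 'y) \<Rightarrow> 'r" where
  "ktensor f g = (\<lambda>(a, b) (x, y). inf (f a x) (g b y))"

definition kid :: "'x \<Rightarrow> 'x \<Rightarrow> 'r::{distrib_lattice,bounded_lattice}" where
  "kid = (\<lambda>a x. if x = a then top else bot)"

definition kcopy :: "'x \<Rightarrow> ('x \<times> 'x) \<Rightarrow> 'r::{distrib_lattice,bounded_lattice}" where
  "kcopy = (\<lambda>x (x1, x2). if x1 = x \<and> x2 = x then top else bot)"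

end

theory Submission
  imports Defs
begin

lemma lsum_cfc: "comp_fun_commute_on UNIV (\<lambda>x acc. sup ((f::'a \<Rightarrow> 'r::{distrib_lattice,bounded_lattice}) x) acc)"
  by unfold_locales (auto simp: fun_eq_iff sup_left_commute)

lemma lsum_empty[simp]: "lsum f {} = bot"
  by (simp add: lsum_def)

lemma lsum_insert: "finite S \<Longrightarrow> x \<notin> S \<Longrightarrow> lsum f (insert x S) = sup (f x) (lsum f S)"
  unfolding lsum_def by (simp add: comp_fun_commute_on.fold_insert[OF lsum_cfc])

lemma lsum_le_iff: "finite S \<Longrightarrow> (lsum f S \<le> z) \<longleftrightarrow> (\<forall>x\<in>S. f x \<le> z)"
  by (induction S rule: finite_induct) (auto simp: lsum_insert)

lemma lsum_ge: "finite S \<Longrightarrow> x \<in> S \<Longrightarrow> f x \<le> lsum f S"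
  using lsum_le_iff by blast

lemma lsum_single:
  assumes "finite S" "\<And>x. x \<in> S \<Longrightarrow> x \<noteq> u \<Longrightarrow> f x = bot"
    and "u \<notin> S \<Longrightarrow> v = bot" and "u \<in> S \<Longrightarrow> v = f u"
  shows "lsum f S = v"
proof (rule antisym)
  show "lsum f S \<le> v" using assms
    by (subst lsum_le_iff) (auto, metis bot.extremum order_refl)
next
  show "v \<le> lsum f S" using assms lsum_ge[of S u f] by (cases "u \<in> S") auto
qed

lemma copy_form:
  assumes "finite (supp (r a))"
  shows "kcomp kcopy r a (x1, x2) = (if x1 = x2 then r a x1 else bot)"
  unfolding kcomp_def
  apply (rule lsum_single[OF assms, where u=x1])
    apply (auto simp: kcopy_def supp_def)
  done

lemma copy_supp:
  assumes "finite (supp (r a))"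
  shows "finite (supp (kcomp kcopy r a))"
proof -
  have "supp (kcomp kcopy r a) \<subseteq> (\<lambda>x. (x, x)) ` supp (r a)"
    by (auto simp: supp_def copy_form[of r a, OF assms] split: if_splits)
  then show ?thesis using assms finite_subset by blast
qed

lemma K:
  assumes "\<And>a. finite (supp (r a))"
  shows "kcomp (ktensor kid h) (kcomp kcopy r) a (x, y) = inf (h x y) (r a x)"
  unfolding kcomp_def[of "ktensor kid h"]
  apply (rule lsum_single[OF copy_supp[OF assms], where u="(x,x)"])
    apply (auto simp: copy_form[of r a, OF assms] kid_def ktensor_def supp_def split: if_splits)
  done

lemma comp_supp:
  assumes "kmor f" "kmor g"
  shows "finite (supp (kcomp g f a))"
proof -
  have "supp (kcomp g f a) \<subseteq> (\<Union>w\<in>supp (f a). supp (g w))"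
  proof
    fix x assume x: "x \<in> supp (kcomp g f a)"
    show "x \<in> (\<Union>w\<in>supp (f a). supp (g w))"
    proof (rule ccontr)
      assume "x \<notin> (\<Union>w\<in>supp (f a). supp (g w))"
      then have "kcomp g f a x \<le> bot" unfolding kcomp_def
        using assms by (subst lsum_le_iff) (auto simp: kmor_def supp_def)
      then show False using x by (simp add: supp_def bot_unique)
    qed
  qed
  then show ?thesis using assms by (auto simp: kmor_def intro: finite_subset)
qed

theorem proposition2p23:
  fixes f :: "'a \<Rightarrow> 'w \<Rightarrow> 'r::{distrib_lattice,bounded_lattice}"
    and g :: "'w \<Rightarrow> 'x \<Rightarrow> 'r"
    and h1 h2 :: "'x \<Rightarrow> 'y \<Rightarrow> 'r"
  assumes "kmor f" and "kmor g" and "kmor h1" and "kmor h2"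
    and "kcomp (ktensor kid h1) (kcomp kcopy (kcomp g f))
         = kcomp (ktensor kid h2) (kcomp kcopy (kcomp g f))"
  shows "kcomp (ktensor kid (kcomp (ktensor kid h1) (kcomp kcopy g))) (kcomp kcopy f)
       = kcomp (ktensor kid (kcomp (ktensor kid h2) (kcomp kcopy g))) (kcomp kcopy f)"
proof -
  have ff: "\<And>a. finite (supp (f a))" and fg: "\<And>w. finite (supp (g w))"
    using assms(1,2) by (auto simp: kmor_def)
  have H: "inf (h1 x y) (kcomp g f a x) = inf (h2 x y) (kcomp g f a x)" for a x y
    using fun_cong[OF fun_cong[OF assms(5), of a], of "(x,y)"]
    unfolding K[of "kcomp g f", OF comp_supp[OF assms(1,2)]] .
  have E: "inf (inf (h1 x y) (g w x)) (f a w) = inf (inf (h2 x y) (g w x)) (f a w)" for a w x y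
  proof (cases "w \<in> supp (f a)")
    case True
    define c where "c = inf (g w x) (f a w)"
    have le: "c \<le> kcomp g f a x" unfolding c_def kcomp_def
      using lsum_ge[OF ff True, of "\<lambda>w. inf (g w x) (f a w)"] by simp
    have cq: "c = inf c (kcomp g f a x)" using le by (simp add: inf_absorb1)
    have "inf (inf (h1 x y) (g w x)) (f a w) = inf (h1 x y) c" by (simp add: c_def inf_assoc)
    also have "\<dots> = inf (h1 x y) (inf c (kcomp g f a x))" using cq by simp
    also have "\<dots> = inf (inf (h1 x y) (kcomp g f a x)) c" by (simp add: inf_assoc inf_commute inf_left_commute)
    also have "\<dots> = inf (inf (h2 x y) (kcomp g f a x)) c" using H by simp
    also have "\<dots> = inf (h2 x y) (inf c (kcomp g f a x))" by (simp add: inf_assoc inf_commute inf_left_commute)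
    also have "\<dots> = inf (h2 x y) c" using cq by simp
    also have "\<dots> = inf (inf (h2 x y) (g w x)) (f a w)" by (simp add: c_def inf_assoc)
    finally show ?thesis .
  next
    case False
    then show ?thesis by (simp add: supp_def)
  qed
  show ?thesis
  proof (intro ext)
    fix a and z :: "'w \<times> 'x \<times> 'y"
    obtain w x y where z: "z = (w, (x, y))" by (cases z) auto
    show "kcomp (ktensor kid (kcomp (ktensor kid h1) (kcomp kcopy g))) (kcomp kcopy f) a z
       = kcomp (ktensor kid (kcomp (ktensor kid h2) (kcomp kcopy g))) (kcomp kcopy f) a z"
      unfolding z K[of f, OF ff] K[of g, OF fg] using E by simp
  qed
qed

end
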